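(* Let $B$ be a $d\times d$ integral matrix with $|\det(B)|=2$. Then there exist natural numbers $p\le d$, $n_0$, $m_0$ and a row vector $\vec r=[r_1,\dots,r_{p-1},0,\dots,0]$ with $r_j\in\{0,1\}$ such that $$B=L^{(p)}_{\vec r}D_pV,\qquad B=I_{pd}M^{(p)}_{\vec r}D_dU,\qquad B=V_1V_2\cdots V_{n_0}D_dU_1U_2\cdots U_{m_0},$$ where $V,U\in\mathfrak M$ and $V_j,U_i\in\mathfrak G$.
   Context: $I$ is the $d\times d$ identity; $\Delta_{ij}$ is the $d\times d$ matrix with $1$ in position $(i,j)$ and $0$ elsewhere; $I_{ij}$ is the matrix obtained from $I$ by interchanging columns $i$ and $j$ (so $I_{ii}=I$); $D_p=I+\Delta_{pp}$; $S_p=I-2\Delta_{pp}$. $\mathfrak M$ is the group of $d\times d$ integral matrices with determinant $\pm1$, and $\mathfrak G=\{S_p\}\cup\{I\pm\Delta_{ij}:i\ne j\}\cup\{I_{ij}\}$ (elementary matrices). For $\vec r=[r_1,\dots,r_{p-1},0,\dots,0]$: $L^{(p)}_{\vec r}=I+\sum_{j=1}^{p-1}r_j\Delta_{pj}$ and $M^{(p)}_{\vec r}=I+\sum_{j=1}^{p-1}r_j\Delta_{dj}$. *)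

theory Defs
  imports "Jordan_Normal_Form.Determinant"
begin

(* All indices below are 1-based as in the paper: i, j, p range over {1..d};
   the underlying JNF matrices are 0-indexed, hence the shifts "- 1". *)

definition Delta :: "nat \<Rightarrow> nat \<Rightarrow> nat \<Rightarrow> int mat" where
  "Delta d i j = mat d d (\<lambda>(a,b). if a = i - 1 \<and> b = j - 1 then 1 else 0)"

definition Iswap :: "nat \<Rightarrow> nat \<Rightarrow> nat \<Rightarrow> int mat" where
  "Iswap d i j = mat d d (\<lambda>(a,b).
     if b = i - 1 then (if a = j - 1 then 1 else 0)
     else if b = j - 1 then (if a = i - 1 then 1 else 0)
     else if a = b then 1 else 0)"

definition Dmat :: "nat \<Rightarrow> nat \<Rightarrow> int mat" where
  "Dmat d p = 1\<^sub>m d + Delta d p p"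

definition Smat :: "nat \<Rightarrow> nat \<Rightarrow> int mat" where
  "Smat d p = 1\<^sub>m d - 2 \<cdot>\<^sub>m Delta d p p"

(* L^{(p)}_r = I + sum_{j=1}^{p-1} r_j Delta_{pj} *)
definition Lmat :: "nat \<Rightarrow> nat \<Rightarrow> (nat \<Rightarrow> int) \<Rightarrow> int mat" where
  "Lmat d p r = 1\<^sub>m d + mat d d (\<lambda>(a,b).
     if a = p - 1 \<and> 1 \<le> b + 1 \<and> b + 1 \<le> p - 1 then r (b + 1) else 0)"

(* M^{(p)}_r = I + sum_{j=1}^{p-1} r_j Delta_{dj} *)
definition Mmat :: "nat \<Rightarrow> nat \<Rightarrow> (nat \<Rightarrow> int) \<Rightarrow> int mat" where
  "Mmat d p r = 1\<^sub>m d + mat d d (\<lambda>(a,b).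
     if a = d - 1 \<and> 1 \<le> b + 1 \<and> b + 1 \<le> p - 1 then r (b + 1) else 0)"

definition unimod :: "nat \<Rightarrow> int mat set" where
  "unimod d = {A \<in> carrier_mat d d. det A = 1 \<or> det A = -1}"

definition elem :: "nat \<Rightarrow> int mat set" where
  "elem d = {Smat d p | p. 1 \<le> p \<and> p \<le> d}
     \<union> {1\<^sub>m d + Delta d i j | i j. 1 \<le> i \<and> i \<le> d \<and> 1 \<le> j \<and> j \<le> d \<and> i \<noteq> j}
     \<union> {1\<^sub>m d - Delta d i j | i j. 1 \<le> i \<and> i \<le> d \<and> 1 \<le> j \<and> j \<le> d \<and> i \<noteq> j}
     \<union> {Iswap d i j | i j. 1 \<le> i \<and> i \<le> d \<and> 1 \<le> j \<and> j \<le> d}"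

definition prod_mats :: "nat \<Rightarrow> int mat list \<Rightarrow> int mat" where
  "prod_mats d As = foldr (\<lambda>A M. A * M) As (1\<^sub>m d)"

end

theory Submission
  imports Defs "HOL-Library.Z2"
begin


lemma of_int_bit_0: "(of_int x :: bit) = 0 \<longleftrightarrow> even x"
proof -
  obtain k where "x = 2*k \<or> x = 2*k+1" by (metis oddE evenE)
  then show ?thesis by (auto simp: of_int_hom.hom_add)
qed

lemma mult_entry:
  assumes "A \<in> carrier_mat d d" "X \<in> carrier_mat d d" "a < d" "b < d"
  shows "(A * X) $$ (a,b) = (\<Sum>k<d. A $$ (a,k) * X $$ (k,b))"
  using assms by (auto simp: scalar_prod_def lessThan_atLeast0 intro!: sum.cong)

lemma mod2_dep:
  fixes B :: "int mat"
  assumes B: "B \<in> carrier_mat d d" and det: "even (det B)"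
  shows "\<exists>q r. q < d \<and> (\<forall>j. r j \<in> {0,1::int}) \<and>
     (\<forall>b<d. even (B $$ (q,b) + (\<Sum>k<q. r (k+1) * B $$ (k,b))))"
proof -
  let ?h = "of_int :: int \<Rightarrow> bit"
  let ?Bb = "transpose_mat (map_mat ?h B)"
  have Bb: "?Bb \<in> carrier_mat d d" using B by auto
  have "det ?Bb = ?h (det B)" using B by (simp add: det_transpose)
  also have "\<dots> = 0" using det by (simp add: of_int_bit_0)
  finally obtain v where v: "v \<in> carrier_vec d" "v \<noteq> 0\<^sub>v d" "?Bb *\<^sub>v v = 0\<^sub>v d"
    using det_0_iff_vec_prod_zero_field[OF Bb] by auto
  define S where "S = {i. i < d \<and> v $ i \<noteq> 0}"
  have "S \<noteq> {}"
  proof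
    assume "S = {}"
    then have "v = 0\<^sub>v d" using v(1) by (auto simp: S_def intro!: eq_vecI)
    with v(2) show False by simp
  qed
  moreover have fS: "finite S" by (auto simp: S_def)
  ultimately have qS: "Max S \<in> S" by simp
  define q where "q = Max S"
  have qd: "q < d" using qS q_def S_def by auto
  have above: "\<And>i. q < i \<Longrightarrow> i < d \<Longrightarrow> v $ i = 0"
  proof (rule ccontr)
    fix i assume "q < i" "i < d" "v $ i \<noteq> 0"
    then have "i \<in> S" by (simp add: S_def)
    then have "i \<le> q" using Max_ge[OF fS] q_def by simp
    with \<open>q < i\<close> show False by simp
  qed
  define ri where "ri i = (if v $ i = 0 then 0 else 1::int)" for i
  have vri: "v $ i = ?h (ri i)" for i by (auto simp: ri_def)
  define r where "r j = ri (j - 1)" for j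
  have "\<forall>j. r j \<in> {0,1}" by (auto simp: r_def ri_def)
  moreover have "even (B $$ (q,b) + (\<Sum>k<q. r (k+1) * B $$ (k,b)))" if b: "b < d" for b
  proof -
    have "0 = (?Bb *\<^sub>v v) $ b" using v(3) b by simp
    also have "\<dots> = (\<Sum>i<d. ?h (B $$ (i,b)) * v $ i)"
      using b B v(1) by (auto simp: scalar_prod_def lessThan_atLeast0 intro!: sum.cong)
    also have "\<dots> = ?h (\<Sum>i<d. B $$ (i,b) * ri i)"
      by (simp add: vri of_int_hom.hom_sum of_int_hom.hom_mult)
    finally have ev0: "0 = ?h (\<Sum>i<d. B $$ (i,b) * ri i)" .
    have ev: "even (\<Sum>i<d. B $$ (i,b) * ri i)" using ev0 of_int_bit_0 by metis
    have "{..<d} = {..<q} \<union> {q} \<union> {q<..<d}" using qd by auto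
    then have "(\<Sum>i<d. B $$ (i,b) * ri i) = (\<Sum>i<q. B $$ (i,b) * ri i) + B $$ (q,b) * ri q
        + (\<Sum>i\<in>{q<..<d}. B $$ (i,b) * ri i)"
      by (simp add: sum.union_disjoint ivl_disj_int_one(4)[unfolded lessThan_eq_iff] disjoint_iff)
    also have "(\<Sum>i\<in>{q<..<d}. B $$ (i,b) * ri i) = 0" using above by (auto simp: ri_def)
    also have "ri q = 1" using qS q_def S_def ri_def by auto
    also have "(\<Sum>i<q. B $$ (i,b) * ri i) = (\<Sum>k<q. r (k+1) * B $$ (k,b))"
      by (auto simp: r_def intro!: sum.cong)
    finally show ?thesis using ev by simp
  qed
  ultimately show ?thesis using qd by blast
qed



definition good :: "nat \<Rightarrow> int mat \<Rightarrow> bool" where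
  "good d A = (\<exists>Es. set Es \<subseteq> elem d \<and> A = prod_mats d Es)"

lemma elem_cases:
  assumes "G \<in> elem d"
  shows "(\<exists>k<d. G = multrow_mat d k (-1)) \<or>
         (\<exists>k l a. k<d \<and> l<d \<and> k\<noteq>l \<and> G = addrow_mat d a k l) \<or>
         (\<exists>k<d. \<exists>l<d. G = swaprows_mat d k l)"
  using assms unfolding elem_def
proof (elim UnE CollectE exE conjE)
  fix p assume G: "G = Smat d p" and p: "1 \<le> p" "p \<le> d"
  have "G = multrow_mat d (p-1) (-1)" unfolding G Smat_def Delta_def
    by (rule eq_matI) auto
  then show ?thesis using p by (intro disjI1) (rule exI[of _ "p-1"], auto)
next
  fix i j assume G: "G = 1\<^sub>m d + Delta d i j" and ij: "1 \<le> i" "i \<le> d" "1 \<le> j" "j \<le> d" "i \<noteq> j"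
  have "G = addrow_mat d 1 (i-1) (j-1)" unfolding G Delta_def
    by (rule eq_matI) auto
  then show ?thesis using ij by (intro disjI2 disjI1) (rule exI[of _ "i-1"], rule exI[of _ "j-1"], auto)
next
  fix i j assume G: "G = 1\<^sub>m d - Delta d i j" and ij: "1 \<le> i" "i \<le> d" "1 \<le> j" "j \<le> d" "i \<noteq> j"
  have "G = addrow_mat d (-1) (i-1) (j-1)" unfolding G Delta_def
    by (rule eq_matI) auto
  then show ?thesis using ij by (intro disjI2 disjI1) (rule exI[of _ "i-1"], rule exI[of _ "j-1"], auto)
next
  fix i j assume G: "G = Iswap d i j" and ij: "1 \<le> i" "i \<le> d" "1 \<le> j" "j \<le> d"
  have "G = swaprows_mat d (i-1) (j-1)" unfolding G Iswap_def
    by (rule eq_matI) auto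
  moreover have "i-1 < d" "j-1 < d" using ij by auto
  ultimately show ?thesis by blast
qed

lemma multrow_elem: "k < d \<Longrightarrow> multrow_mat d k (-1) \<in> elem d"
proof -
  assume k: "k < d"
  have "multrow_mat d k (-1) = Smat d (k+1)" unfolding Smat_def Delta_def
    by (rule eq_matI) auto
  then show ?thesis unfolding elem_def
    apply (rule ssubst)
    apply (rule UnI1, rule UnI1, rule UnI1)
    using k by (intro CollectI exI[of _ "k+1"]) auto
qed

lemma addrow_elem1: "k < d \<Longrightarrow> l < d \<Longrightarrow> k \<noteq> l \<Longrightarrow> addrow_mat d 1 k l \<in> elem d"
proof -
  assume kl: "k < d" "l < d" "k \<noteq> l"
  have "addrow_mat d 1 k l = 1\<^sub>m d + Delta d (k+1) (l+1)" unfolding Delta_def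
    by (rule eq_matI) auto
  then show ?thesis unfolding elem_def
    apply (rule ssubst)
    apply (rule UnI1, rule UnI1, rule UnI2)
    using kl by (intro CollectI exI[of _ "k+1"] exI[of _ "l+1"]) auto
qed

lemma addrow_elem2: "k < d \<Longrightarrow> l < d \<Longrightarrow> k \<noteq> l \<Longrightarrow> addrow_mat d (-1) k l \<in> elem d"
proof -
  assume kl: "k < d" "l < d" "k \<noteq> l"
  have "addrow_mat d (-1) k l = 1\<^sub>m d - Delta d (k+1) (l+1)" unfolding Delta_def
    by (rule eq_matI) auto
  then show ?thesis unfolding elem_def
    apply (rule ssubst)
    apply (rule UnI1, rule UnI2)
    using kl by (intro CollectI exI[of _ "k+1"] exI[of _ "l+1"]) auto
qed

lemma swaprows_elem: "k < d \<Longrightarrow> l < d \<Longrightarrow> swaprows_mat d k l \<in> elem d"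
proof -
  assume kl: "k < d" "l < d"
  have "swaprows_mat d k l = Iswap d (k+1) (l+1)" unfolding Iswap_def
    by (rule eq_matI) auto
  then show ?thesis unfolding elem_def
    apply (rule ssubst)
    apply (rule UnI2)
    using kl by (intro CollectI exI[of _ "k+1"] exI[of _ "l+1"]) auto
qed

lemma elem_carrier: "G \<in> elem d \<Longrightarrow> G \<in> carrier_mat d d"
  using elem_cases[of G d] by auto

lemma det_swaprows_mat': "k < d \<Longrightarrow> l < d \<Longrightarrow> det (swaprows_mat d k l :: int mat) = 1 \<or> det (swaprows_mat d k l :: int mat) = -1"
proof (cases "k = l")
  case True
  assume "k < d" "l < d"
  have "swaprows_mat d k l = (1\<^sub>m d :: int mat)" using True by (intro eq_matI) auto
  then show ?thesis by simp
qed (simp add: det_swaprows_mat)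

lemma elem_det: "G \<in> elem d \<Longrightarrow> det G = 1 \<or> det G = -1"
  using elem_cases[of G d] det_swaprows_mat'[of _ d]
  by (auto simp: det_multrow_mat det_addrow_mat)

lemma prod_mats_props:
  "set Es \<subseteq> elem d \<Longrightarrow> prod_mats d Es \<in> carrier_mat d d \<and> (det (prod_mats d Es) = 1 \<or> det (prod_mats d Es) = -1)"
proof (induction Es)
  case Nil then show ?case by (simp add: prod_mats_def)
next
  case (Cons G Es)
  then have G: "G \<in> elem d" and IH: "prod_mats d Es \<in> carrier_mat d d" 
      "det (prod_mats d Es) = 1 \<or> det (prod_mats d Es) = -1" by auto
  have eq: "prod_mats d (G # Es) = G * prod_mats d Es" by (simp add: prod_mats_def)
  show ?case unfolding eq using elem_carrier[OF G] IH elem_det[OF G]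
    by (auto simp: det_mult[of _ d])
qed

lemma prod_mats_append: "set Es \<subseteq> elem d \<Longrightarrow> set Fs \<subseteq> elem d \<Longrightarrow>
   prod_mats d (Es @ Fs) = prod_mats d Es * prod_mats d Fs"
proof (induction Es)
  case Nil then show ?case using prod_mats_props[of Fs d] left_mult_one_mat[of "prod_mats d Fs" d d] by (simp add: prod_mats_def)
next
  case (Cons G Es)
  then have G: "G \<in> elem d" by auto
  have "prod_mats d ((G # Es) @ Fs) = G * prod_mats d (Es @ Fs)" by (simp add: prod_mats_def)
  also have "\<dots> = G * (prod_mats d Es * prod_mats d Fs)" using Cons by auto
  also have "\<dots> = (G * prod_mats d Es) * prod_mats d Fs"
    using elem_carrier[OF G] prod_mats_props[of Es d] prod_mats_props[of Fs d] Cons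
    by (auto simp: assoc_mult_mat[of _ d d _ d _ d])
  finally show ?case by (simp add: prod_mats_def)
qed

lemma good_carrier: "good d A \<Longrightarrow> A \<in> carrier_mat d d"
  unfolding good_def using prod_mats_props by blast

lemma good_det: "good d A \<Longrightarrow> det A = 1 \<or> det A = -1"
  unfolding good_def using prod_mats_props by blast

lemma good_one: "good d (1\<^sub>m d)"
  unfolding good_def by (rule exI[of _ "[]"]) (simp add: prod_mats_def)

lemma good_elem: "G \<in> elem d \<Longrightarrow> good d G"
  unfolding good_def
  by (rule exI[of _ "[G]"]) (simp add: prod_mats_def right_mult_one_mat[OF elem_carrier])

lemma good_mult: "good d A \<Longrightarrow> good d B \<Longrightarrow> good d (A * B)"
  unfolding good_def using prod_mats_append by (metis le_sup_iff set_append)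

lemma addrow_mat_add: "k < d \<Longrightarrow> l < d \<Longrightarrow> k \<noteq> l \<Longrightarrow>
  addrow_mat d (a + b) k l = addrow_mat d a k l * addrow_mat d (b::int) k l"
  by (subst addrow_mat[symmetric, of _ d d], auto intro!: eq_matI simp: algebra_simps)

lemma good_addrow_mat: assumes "k < d" "l < d" "k \<noteq> l" shows "good d (addrow_mat d a k l)"
proof -
  have pos: "good d (addrow_mat d (int n) k l) \<and> good d (addrow_mat d (- int n) k l)" for n
  proof (induction n)
    case 0
    have "addrow_mat d 0 k l = (1\<^sub>m d :: int mat)" by (rule eq_matI) auto
    then show ?case using good_one by simp
  next
    case (Suc n)
    have "addrow_mat d (int (Suc n)) k l = addrow_mat d 1 k l * addrow_mat d (int n) k l"
      using addrow_mat_add[OF assms, of 1 "int n"] by simp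
    moreover have "addrow_mat d (- int (Suc n)) k l = addrow_mat d (-1) k l * addrow_mat d (- int n) k l"
      using addrow_mat_add[OF assms, of "-1" "- int n"] by simp
    ultimately show ?case using Suc good_mult good_elem addrow_elem1[OF assms] addrow_elem2[OF assms]
      by metis
  qed
  show ?thesis
  proof (cases "a \<ge> 0")
    case True then show ?thesis using pos[of "nat a"] by simp
  next
    case False then show ?thesis using pos[of "nat (-a)"] by simp
  qed
qed

lemma good_addrow_back:
  assumes A: "A \<in> carrier_mat d d" and kl: "k < d" "l < d" "k \<noteq> l"
    and g: "good d (addrow a k l A)"
  shows "good d A"
proof -
  have "A = addrow (-a) k l (addrow a k l A)"
    using A kl by (auto intro!: eq_matI simp: algebra_simps)
  also have "\<dots> = addrow_mat d (-a) k l * addrow a k l A"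
    by (rule addrow_mat, insert A kl, auto)
  finally show ?thesis using good_mult good_addrow_mat[OF kl] g by metis
qed

lemma good_swaprows_back:
  assumes A: "A \<in> carrier_mat d d" and kl: "k < d" "l < d"
    and g: "good d (swaprows k l A)"
  shows "good d A"
proof -
  have "A = swaprows k l (swaprows k l A)"
    using A kl by (auto intro!: eq_matI)
  also have "\<dots> = swaprows_mat d k l * swaprows k l A"
    by (rule swaprows_mat, insert A kl, auto)
  finally show ?thesis using good_mult good_elem swaprows_elem[OF kl] g by metis
qed

lemma good_multrow_back:
  assumes A: "A \<in> carrier_mat d d" and k: "k < d"
    and g: "good d (multrow k (-1) A)"
  shows "good d A"
proof -
  have "A = multrow k (-1) (multrow k (-1) A)"
    using A by (auto intro!: eq_matI)
  also have "\<dots> = multrow_mat d k (-1) * multrow k (-1) A"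
    by (rule multrow_mat, insert A k, auto)
  finally show ?thesis using good_mult good_elem multrow_elem[OF k] g by metis
qed



definition SS :: "nat \<Rightarrow> int mat \<Rightarrow> (nat \<times> nat) set" where
  "SS d A = {(i,j). i < d \<and> j < d \<and> ((i \<noteq> j \<and> A $$ (i,j) \<noteq> 0) \<or> (i = j \<and> A $$ (i,i) = -1))}"

lemma SS_finite: "finite (SS d A)"
  by (rule finite_subset[of _ "{..<d} \<times> {..<d}"]) (auto simp: SS_def)

lemma tri_good:
  assumes "A \<in> carrier_mat d d"
    and "\<forall>i j. j < i \<longrightarrow> i < d \<longrightarrow> A $$ (i,j) = 0"
    and "\<forall>i<d. A $$ (i,i) = 1 \<or> A $$ (i,i) = -1"
  shows "good d A"
  using assms
proof (induction "card (SS d A)" arbitrary: A rule: less_induct)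
  case less
  note A = less.prems(1) and ut = less.prems(2) and dg = less.prems(3)
  show ?case
  proof (cases "\<exists>k<d. A $$ (k,k) = -1")
    case True
    then obtain k where k: "k < d" "A $$ (k,k) = -1" by blast
    define A' where "A' = multrow k (-1) A"
    have A': "A' \<in> carrier_mat d d" using A by (simp add: A'_def)
    have e: "\<And>i j. i < d \<Longrightarrow> j < d \<Longrightarrow> A' $$ (i,j) = (if i = k then - A $$ (i,j) else A $$ (i,j))"
      using A by (auto simp: A'_def)
    have "SS d A' = SS d A - {(k,k)}"
      using k by (auto simp: SS_def e split: if_splits)
    moreover have "(k,k) \<in> SS d A" using k by (auto simp: SS_def)
    ultimately have "card (SS d A') < card (SS d A)"
      by (metis SS_finite card_Diff1_less)
    moreover have "\<forall>i j. j < i \<longrightarrow> i < d \<longrightarrow> A' $$ (i,j) = 0" using ut by (auto simp: e)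
    moreover have "\<forall>i<d. A' $$ (i,i) = 1 \<or> A' $$ (i,i) = -1" using dg by (auto simp: e)
    ultimately have "good d A'" using less.hyps A' by blast
    then show ?thesis using good_multrow_back[OF A k(1)] by (simp add: A'_def)
  next
    case False
    then have d1: "\<And>k. k < d \<Longrightarrow> A $$ (k,k) = 1" using dg by auto
    show ?thesis
    proof (cases "SS d A = {}")
      case True
      have "A = 1\<^sub>m d"
      proof (rule eq_matI)
        fix i j assume ij: "i < dim_row (1\<^sub>m d)" "j < dim_col (1\<^sub>m d)"
        show "A $$ (i,j) = 1\<^sub>m d $$ (i,j)"
        proof (cases "i = j")
          case True then show ?thesis using d1 ij by auto
        next
          case False
          then have "A $$ (i,j) = 0" using True ij by (auto simp: SS_def)
          then show ?thesis using False ij by auto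
        qed
      qed (use A in auto)
      then show ?thesis using good_one by simp
    next
      case False
      define C where "C = snd ` SS d A"
      have fC: "finite C" "C \<noteq> {}" using False SS_finite by (auto simp: C_def)
      define c where "c = Max C"
      have "c \<in> C" using fC c_def by simp
      then obtain i where ic: "(i,c) \<in> SS d A" by (auto simp: C_def)
      have icd: "i < d" "c < d" "i \<noteq> c" "A $$ (i,c) \<noteq> 0" using ic d1 by (auto simp: SS_def)
      have rowc: "A $$ (c,j) = (if j = c then 1 else 0)" if j: "j < d" for j
      proof (cases "j = c")
        case True then show ?thesis using d1 icd by simp
      next
        case False
        show ?thesis
        proof (cases "j < c")
          case True then show ?thesis using ut icd by auto
        next
          case False2: False
          show ?thesis
          proof (rule ccontr)
            assume "A $$ (c,j) \<noteq> (if j = c then 1 else 0)"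
            then have "(c,j) \<in> SS d A" using False j icd by (auto simp: SS_def)
            then have "j \<in> C" by (force simp: C_def)
            then have "j \<le> c" using fC c_def by simp
            then show False using False False2 by simp
          qed
        qed
      qed
      define a where "a = - A $$ (i,c)"
      define A' where "A' = addrow a i c A"
      have A': "A' \<in> carrier_mat d d" using A by (simp add: A'_def)
      have e: "\<And>r j. r < d \<Longrightarrow> j < d \<Longrightarrow> A' $$ (r,j) = (if r = i then (if j = c then 0 else A $$ (r,j)) else A $$ (r,j))"
        using A icd by (auto simp: A'_def a_def rowc)
      have "SS d A' = SS d A - {(i,c)}"
        using icd by (auto simp: SS_def e split: if_splits)
      then have "card (SS d A') < card (SS d A)"
        by (metis SS_finite card_Diff1_less ic)
      moreover have "\<forall>r j. j < r \<longrightarrow> r < d \<longrightarrow> A' $$ (r,j) = 0" using ut by (auto simp: e)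
      moreover have "\<forall>r<d. A' $$ (r,r) = 1 \<or> A' $$ (r,r) = -1" using dg icd by (auto simp: e)
      ultimately have "good d A'" using less.hyps A' by blast
      then show ?thesis using good_addrow_back[OF A icd(1,2,3)] by (simp add: A'_def)
    qed
  qed
qed



lemma ut_good:
  assumes A: "A \<in> carrier_mat d d"
    and ut: "\<forall>i j. j < i \<longrightarrow> i < d \<longrightarrow> A $$ (i,j) = 0"
    and dt: "det A = 1 \<or> det A = -1"
  shows "good d A"
proof (rule tri_good[OF A ut], intro allI impI)
  fix k assume k: "k < d"
  have "upper_triangular A" using A ut by (auto simp: upper_triangular_def)
  then have "det A = (\<Prod>i = 0 ..< d. A $$ (i,i))"
    using det_upper_triangular[OF _ A] A by (simp add: prod_list_diag_prod)
  moreover have "A $$ (k,k) dvd (\<Prod>i = 0 ..< d. A $$ (i,i))" using k by (intro dvd_prodI) auto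
  ultimately have "A $$ (k,k) dvd 1" using dt by auto
  then show "A $$ (k,k) = 1 \<or> A $$ (k,k) = -1" by (auto simp: zdvd1_eq abs_if split: if_splits)
qed

lemma abs_reduce:
  fixes x y :: int
  assumes "x \<noteq> 0" "y \<noteq> 0" "\<bar>x\<bar> \<le> \<bar>y\<bar>"
  shows "\<bar>(if (y > 0) = (x > 0) then -1 else 1) * x + y\<bar> = \<bar>y\<bar> - \<bar>x\<bar>"
  using assms by (auto simp: abs_if)

definition mu :: "nat \<Rightarrow> nat \<Rightarrow> int mat \<Rightarrow> nat" where
  "mu d c A = (\<Sum>r\<in>{c..<d}. nat \<bar>A $$ (r,c)\<bar>) + (if A $$ (c,c) = 0 then 1 else 0)"

lemma col_step:
  assumes c: "c < d"
    and next_: "\<And>A. A \<in> carrier_mat d d \<Longrightarrow> (\<forall>i j. j < Suc c \<longrightarrow> j < i \<longrightarrow> i < d \<longrightarrow> A $$ (i,j) = 0)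
       \<Longrightarrow> det A = 1 \<or> det A = -1 \<Longrightarrow> good d A"
  shows "A \<in> carrier_mat d d \<Longrightarrow> (\<forall>i j. j < c \<longrightarrow> j < i \<longrightarrow> i < d \<longrightarrow> A $$ (i,j) = 0)
       \<Longrightarrow> det A = 1 \<or> det A = -1 \<Longrightarrow> good d A"
proof (induction "mu d c A" arbitrary: A rule: less_induct)
  case less
  note A = less.prems(1) and ut = less.prems(2) and dt = less.prems(3)
  show ?case
  proof (cases "\<forall>r. c < r \<longrightarrow> r < d \<longrightarrow> A $$ (r,c) = 0")
    case True
    have "\<forall>i j. j < Suc c \<longrightarrow> j < i \<longrightarrow> i < d \<longrightarrow> A $$ (i,j) = 0"
    proof (intro allI impI)
      fix i j assume "j < Suc c" "j < i" "i < d"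
      then show "A $$ (i,j) = 0" using True ut by (cases "j = c") auto
    qed
    then show ?thesis using next_ A dt by blast
  next
    case False
    then obtain i where i: "c < i" "i < d" "A $$ (i,c) \<noteq> 0" by blast
    show ?thesis
    proof (cases "A $$ (c,c) = 0")
      case True
      define A' where "A' = swaprows c i A"
      have A': "A' \<in> carrier_mat d d" using A by (simp add: A'_def)
      have e: "\<And>r j. r < d \<Longrightarrow> j < d \<Longrightarrow> A' $$ (r,j) = (if r = c then A $$ (i,j) else if r = i then A $$ (c,j) else A $$ (r,j))"
        using A i c by (auto simp: A'_def)
      have ut': "\<forall>r j. j < c \<longrightarrow> j < r \<longrightarrow> r < d \<longrightarrow> A' $$ (r,j) = 0"
        using ut i c by (auto simp: e)
      have dt': "det A' = 1 \<or> det A' = -1"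
        using dt det_swaprows[OF c i(2) _ A, of ] i by (auto simp: A'_def)
      have "(\<Sum>r\<in>{c..<d}. nat \<bar>A' $$ (r,c)\<bar>) = (\<Sum>r\<in>{c..<d}. nat \<bar>A $$ (r,c)\<bar>)"
      proof -
        have s1: "{c..<d} = insert c (insert i ({c..<d} - {c,i}))" using i c by auto
        have "(\<Sum>r\<in>{c..<d}. nat \<bar>A' $$ (r,c)\<bar>) = nat \<bar>A' $$ (c,c)\<bar> + nat \<bar>A' $$ (i,c)\<bar> + (\<Sum>r\<in>{c..<d} - {c,i}. nat \<bar>A' $$ (r,c)\<bar>)"
          using i by (subst s1) simp
        also have "(\<Sum>r\<in>{c..<d} - {c,i}. nat \<bar>A' $$ (r,c)\<bar>) = (\<Sum>r\<in>{c..<d} - {c,i}. nat \<bar>A $$ (r,c)\<bar>)"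
          using c by (intro sum.cong) (auto simp: e)
        also have "(\<Sum>r\<in>{c..<d}. nat \<bar>A $$ (r,c)\<bar>) = nat \<bar>A $$ (c,c)\<bar> + nat \<bar>A $$ (i,c)\<bar> + (\<Sum>r\<in>{c..<d} - {c,i}. nat \<bar>A $$ (r,c)\<bar>)"
          using i by (subst s1) simp
        ultimately show ?thesis using c i by (simp add: e)
      qed
      moreover have "A' $$ (c,c) \<noteq> 0" using c i by (simp add: e)
      ultimately have "mu d c A' < mu d c A" using True by (simp add: mu_def)
      then have "good d A'" using less.hyps A' ut' dt' by blast
      then show ?thesis using good_swaprows_back[OF A c i(2)] by (simp add: A'_def)
    next
      case False
      define a where "a = (if \<bar>A $$ (c,c)\<bar> \<le> \<bar>A $$ (i,c)\<bar> then i else c)"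
      define b where "b = (if \<bar>A $$ (c,c)\<bar> \<le> \<bar>A $$ (i,c)\<bar> then c else i)"
      have ab: "a \<noteq> b" "c \<le> a" "a < d" "c \<le> b" "b < d" "A $$ (a,c) \<noteq> 0" "A $$ (b,c) \<noteq> 0"
        "\<bar>A $$ (b,c)\<bar> \<le> \<bar>A $$ (a,c)\<bar>"
        using i False c by (auto simp: a_def b_def)
      define s where "s = (if (A $$ (a,c) > 0) = (A $$ (b,c) > 0) then -1 else (1::int))"
      define A' where "A' = addrow s a b A"
      have A': "A' \<in> carrier_mat d d" using A by (simp add: A'_def)
      have e: "\<And>r j. r < d \<Longrightarrow> j < d \<Longrightarrow> A' $$ (r,j) = (if r = a then s * A $$ (b,j) + A $$ (a,j) else A $$ (r,j))"
        using A ab by (auto simp: A'_def)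
      have red: "\<bar>A' $$ (a,c)\<bar> = \<bar>A $$ (a,c)\<bar> - \<bar>A $$ (b,c)\<bar>"
        using abs_reduce[of "A $$ (b,c)" "A $$ (a,c)"] ab c by (simp add: e s_def)
      have ut': "\<forall>r j. j < c \<longrightarrow> j < r \<longrightarrow> r < d \<longrightarrow> A' $$ (r,j) = 0"
        using ut ab c by (auto simp: e)
      have dt': "det A' = 1 \<or> det A' = -1"
        using dt det_addrow[OF ab(5) ab(1) A] by (simp add: A'_def)
      have "(\<Sum>r\<in>{c..<d}. nat \<bar>A' $$ (r,c)\<bar>) < (\<Sum>r\<in>{c..<d}. nat \<bar>A $$ (r,c)\<bar>)"
      proof (rule sum_strict_mono_ex1)
        show "\<forall>r\<in>{c..<d}. nat \<bar>A' $$ (r,c)\<bar> \<le> nat \<bar>A $$ (r,c)\<bar>"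
          using red c by (auto simp: e)
        show "\<exists>r\<in>{c..<d}. nat \<bar>A' $$ (r,c)\<bar> < nat \<bar>A $$ (r,c)\<bar>"
          using red ab by (intro bexI[of _ a]) auto
      qed simp
      moreover have "A' $$ (c,c) \<noteq> 0"
      proof (cases "a = c")
        case True
        then have "\<bar>A $$ (i,c)\<bar> < \<bar>A $$ (c,c)\<bar>" using i by (auto simp: a_def split: if_splits)
        moreover have "b = i" using True i by (auto simp: a_def b_def split: if_splits)
        ultimately show ?thesis using red True by auto
      next
        case False
        then show ?thesis using c \<open>A $$ (c,c) \<noteq> 0\<close> by (simp add: e)
      qed
      ultimately have "mu d c A' < mu d c A" using False by (simp add: mu_def)
      then have "good d A'" using less.hyps A' ut' dt' by blast
      then show ?thesis using good_addrow_back[OF A ab(3) ab(5) ab(1)] by (simp add: A'_def)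
    qed
  qed
qed

lemma unimod_good:
  assumes "A \<in> carrier_mat d d" "det A = 1 \<or> det A = -1"
  shows "good d A"
proof -
  have "\<forall>A. A \<in> carrier_mat d d \<longrightarrow> (\<forall>i j. j < d - m \<longrightarrow> j < i \<longrightarrow> i < d \<longrightarrow> A $$ (i,j) = 0)
       \<longrightarrow> (det A = 1 \<or> det A = -1) \<longrightarrow> good d A" for m
  proof (induction m)
    case 0
    then show ?case using ut_good by auto
  next
    case (Suc m)
    show ?case
    proof (cases "Suc m \<le> d")
      case True
      then have eq: "Suc (d - Suc m) = d - m" by simp
      show ?thesis
        using col_step[of "d - Suc m" d] Suc.IH True unfolding eq by auto
    next
      case False
      then have "d - Suc m = d - m" by simp
      then show ?thesis using Suc.IH by simp
    qed
  qed
  from this[of d] assms show ?thesis by auto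
qed



lemma right_mult_entry:
  assumes X: "X \<in> carrier_mat d d" and Y: "Y \<in> carrier_mat d d" and ab: "a < d" "b < d"
    and fb: "f < d" and Yd: "\<And>j. j < d \<Longrightarrow> Y $$ (j,b) = (if j = f then w else 0)"
  shows "(X * Y) $$ (a,b) = X $$ (a, f) * w"
proof -
  have "(X * Y) $$ (a,b) = (\<Sum>k<d. X $$ (a,k) * Y $$ (k,b))" by (rule mult_entry[OF X Y ab])
  also have "\<dots> = (\<Sum>k<d. if k = f then X $$ (a,k) * w else 0)"
    by (rule sum.cong) (auto simp: Yd)
  also have "\<dots> = X $$ (a, f) * w" using fb by (simp add: sum.delta')
  finally show ?thesis .
qed

lemma mult_multrow_entry:
  assumes X: "X \<in> carrier_mat d d" and ab: "a < d" "b < d"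
  shows "(X * multrow_mat d k c) $$ (a,b) = X $$ (a,b) * (if b = k then c else 1)"
  by (rule right_mult_entry[OF X _ ab ab(2)]) (use ab in auto)

lemma mult_swaprows_entry:
  assumes X: "X \<in> carrier_mat d d" and ab: "a < d" "b < d" and kl: "k < d" "l < d"
  shows "(X * swaprows_mat d k l) $$ (a,b) = X $$ (a, if b = k then l else if b = l then k else b)"
  using right_mult_entry[OF X _ ab, where f = "if b = k then l else if b = l then k else b" and Y = "swaprows_mat d k l" and w = 1] ab kl
  by auto

theorem proposition3p4:
  fixes d :: nat and B :: "int mat"
  assumes "B \<in> carrier_mat d d" and "\<bar>det B\<bar> = 2"
  shows "\<exists>p r V U Vs Us.
           1 \<le> p \<and> p \<le> d \<and> (\<forall>j \<in> {1..<p}. r j \<in> {0, 1}) \<and>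
           V \<in> unimod d \<and> U \<in> unimod d \<and>
           set Vs \<subseteq> elem d \<and> set Us \<subseteq> elem d \<and>
           B = Lmat d p r * Dmat d p * V \<and>
           B = Iswap d p d * Mmat d p r * Dmat d d * U \<and>
           B = prod_mats d Vs * Dmat d d * prod_mats d Us"
proof -
  note Bc = assms(1)
  have "det B = 2 \<or> det B = -2" using assms(2) by arith
  then have "even (det B)" by auto
  then obtain q r where qd: "q < d" and r01: "\<forall>j. r j \<in> {0,1::int}"
    and ev: "\<forall>b<d. even (B $$ (q,b) + (\<Sum>k<q. r (k+1) * B $$ (k,b)))"
    using mod2_dep[OF Bc] by blast
  define p where "p = q + 1"
  define sg where "sg b = (\<Sum>k<q. r (k+1) * B $$ (k,b))" for b
  define V where "V = mat d d (\<lambda>(a,b). if a = q then (B $$ (q,b) - sg b) div 2 else B $$ (a,b))"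
  have Vc: "V \<in> carrier_mat d d" by (simp add: V_def)
  have V2: "2 * V $$ (q,b) = B $$ (q,b) - sg b" if "b < d" for b
  proof -
    have "even (B $$ (q,b) + sg b)" using ev that by (simp add: sg_def)
    then have "even (B $$ (q,b) + sg b - 2 * sg b)" by (intro dvd_diff) auto
    then have "even (B $$ (q,b) - sg b)" by (simp add: algebra_simps)
    then show ?thesis using that qd by (simp add: V_def)
  qed
  have Vo: "V $$ (a,b) = B $$ (a,b)" if "a < d" "b < d" "a \<noteq> q" for a b
    using that by (simp add: V_def)
  define L where "L = Lmat d p r"
  define M where "M = Mmat d p r"
  define Dp where "Dp = Dmat d p"
  define Dd where "Dd = Dmat d d"
  define S where "S = Iswap d p d"
  have Lc: "L \<in> carrier_mat d d" and Mc: "M \<in> carrier_mat d d" by (auto simp: L_def M_def Lmat_def Mmat_def)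
  have Le: "L $$ (a,b) = (if a = b then 1 else 0) + (if a = q \<and> b < q then r (b+1) else 0)"
    if "a < d" "b < d" for a b using that by (auto simp: L_def Lmat_def p_def)
  have Me: "M $$ (a,b) = (if a = b then 1 else 0) + (if a = d - 1 \<and> b < q then r (b+1) else 0)"
    if "a < d" "b < d" for a b using that by (auto simp: M_def Mmat_def p_def)
  have Dpm: "Dp = multrow_mat d q 2" unfolding Dp_def Dmat_def Delta_def p_def
    by (rule eq_matI) auto
  have Ddm: "Dd = multrow_mat d (d-1) 2" unfolding Dd_def Dmat_def Delta_def
    by (rule eq_matI) auto
  have Sm: "S = swaprows_mat d q (d-1)" unfolding S_def Iswap_def p_def
    by (rule eq_matI) auto
  have d1: "d - 1 < d" using qd by simp
  have Dpc: "Dp \<in> carrier_mat d d" "Dd \<in> carrier_mat d d" "S \<in> carrier_mat d d"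
    by (auto simp: Dpm Ddm Sm)
  define X where "X = Dp * V"
  have Xc: "X \<in> carrier_mat d d" using mult_carrier_mat[OF Dpc(1) Vc] by (simp add: X_def)
  have Xe: "X $$ (a,b) = (if a = q then B $$ (q,b) - sg b else B $$ (a,b))" if "a < d" "b < d" for a b
  proof -
    have "X = multrow q 2 V" unfolding X_def Dpm by (rule multrow_mat[symmetric, OF Vc])
    then show ?thesis using that Vc V2 Vo by auto
  qed
  have LX: "L * X = B"
  proof (rule eq_matI)
    fix a b assume ab: "a < dim_row B" "b < dim_col B"
    then have ab': "a < d" "b < d" using Bc by auto
    have "(L * X) $$ (a,b) = (\<Sum>k<d. L $$ (a,k) * X $$ (k,b))" by (rule mult_entry[OF Lc Xc ab'])
    also have "\<dots> = (\<Sum>k<d. (if k = a then X $$ (k,b) else 0) + (if a = q \<and> k < q then r (k+1) * X $$ (k,b) else 0))"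
      by (rule sum.cong) (auto simp: Le ab' algebra_simps)
    also have "\<dots> = X $$ (a,b) + (\<Sum>k<d. if a = q \<and> k < q then r (k+1) * X $$ (k,b) else 0)"
      using ab' by (simp add: sum.distrib sum.delta')
    also have "(\<Sum>k<d. if a = q \<and> k < q then r (k+1) * X $$ (k,b) else 0) = (if a = q then sg b else 0)"
    proof (cases "a = q")
      case True
      have "(\<Sum>k<d. if a = q \<and> k < q then r (k+1) * X $$ (k,b) else 0) = (\<Sum>k<d. if k \<in> {k. k < q} then r (k+1) * X $$ (k,b) else 0)"
        using True by simp
      also have "\<dots> = (\<Sum>k\<in>{..<d} \<inter> {k. k < q}. r (k+1) * X $$ (k,b))"
        by (rule sum.inter_restrict[symmetric]) simp
      also have "{..<d} \<inter> {k. k < q} = {..<q}" using qd by auto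
      also have "(\<Sum>k<q. r (k+1) * X $$ (k,b)) = sg b"
        unfolding sg_def using qd ab' by (intro sum.cong) (auto simp: Xe)
      finally show ?thesis using True by simp
    qed simp
    finally show "(L * X) $$ (a,b) = B $$ (a,b)" using ab' by (auto simp: Xe)
  qed (use Lc Bc Xc in auto)
  have B1: "B = L * Dp * V"
    using LX assoc_mult_mat[OF Lc Dpc(1) Vc] by (simp add: X_def)
  have detL: "det L = 1"
  proof -
    have "det L = prod_list (diag_mat L)"
      by (rule det_lower_triangular[OF _ Lc]) (auto simp: Le)
    also have "\<dots> = 1" unfolding prod_list_diag_prod using Lc by (intro prod.neutral) (auto simp: Le)
    finally show ?thesis .
  qed
  have detM: "det M = 1"
  proof -
    have "det M = prod_list (diag_mat M)"
      by (rule det_lower_triangular[OF _ Mc]) (auto simp: Me)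
    also have "\<dots> = 1" unfolding prod_list_diag_prod using Mc qd by (intro prod.neutral) (auto simp: Me)
    finally show ?thesis .
  qed
  have "det B = det L * det Dp * det V"
    unfolding B1 using Lc Dpc Vc by (simp add: det_mult[of _ d])
  then have "det B = 2 * det V" using detL by (simp add: Dpm det_multrow_mat[OF qd])
  then have detV: "det V = 1 \<or> det V = -1" using assms(2) by (auto simp: abs_if split: if_splits)
  have detS: "det S = 1 \<or> det S = -1" unfolding Sm by (rule det_swaprows_mat'[OF qd d1])
  define U where "U = S * V"
  have Uc: "U \<in> carrier_mat d d" using mult_carrier_mat[OF Dpc(3) Vc] by (simp add: U_def)
  have detU: "det U = 1 \<or> det U = -1"
    using detS detV Vc Dpc by (auto simp: U_def det_mult[of _ d])
  have SS1: "S * S = 1\<^sub>m d" unfolding Sm by (rule swaprows_mat_inv[OF qd d1])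
  have key: "S * M * Dd * S = L * Dp"
  proof (rule eq_matI)
    fix a b assume ab: "a < dim_row (L * Dp)" "b < dim_col (L * Dp)"
    then have ab': "a < d" "b < d" using Lc Dpc by auto
    have c1: "M * Dd \<in> carrier_mat d d" using Mc Dpc by auto
    have "S * M * Dd = S * (M * Dd)" using assoc_mult_mat[OF Dpc(3) Mc Dpc(2)] .
    also have "\<dots> = swaprows q (d-1) (M * Dd)" unfolding Sm by (rule swaprows_mat[symmetric, OF c1 qd d1])
    finally have e1: "S * M * Dd = swaprows q (d-1) (M * Dd)" .
    have c2: "S * M * Dd \<in> carrier_mat d d" using c1 by (simp add: e1)
    let ?s = "if b = q then d - 1 else if b = d - 1 then q else b"
    have sd: "?s < d" using ab' qd by auto
    have "(S * M * Dd * S) $$ (a,b) = (S * M * Dd) $$ (a, ?s)"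
      unfolding Sm[symmetric] using mult_swaprows_entry[OF c2 ab' qd d1] by (simp add: Sm)
    also have "\<dots> = (M * Dd) $$ (if a = q then d - 1 else if a = d - 1 then q else a, ?s)"
      unfolding e1 using ab' sd qd by (subst index_mat_swaprows(1)) (use c1 in auto)
    also have "\<dots> = M $$ (if a = q then d - 1 else if a = d - 1 then q else a, ?s) * (if ?s = d - 1 then 2 else 1)"
      unfolding Ddm by (rule mult_multrow_entry[OF Mc]) (use ab' qd sd in auto)
    also have "\<dots> = (L * Dp) $$ (a,b)"
    proof -
      let ?t = "if a = q then d - 1 else if a = d - 1 then q else a"
      have td: "?t < d" using ab' qd by auto
      have h1: "(?s = d - 1) = (b = q)" using ab' qd by auto
      have h2: "(?t = ?s) = (a = b)" using ab' qd by auto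
      have h3: "(?t = d - 1 \<and> ?s < q) = (a = q \<and> b < q)" using ab' qd by auto
      have h4: "b < q \<Longrightarrow> ?s = b" using qd by auto
      have "M $$ (?t, ?s) = (if a = b then 1 else 0) + (if a = q \<and> b < q then r (b+1) else 0)"
        unfolding Me[OF td sd] h2 h3 using h4 by auto
      then have "M $$ (?t, ?s) * (if ?s = d - 1 then 2 else 1) = L $$ (a,b) * (if b = q then 2 else 1)"
        unfolding h1 Le[OF ab'] by simp
      also have "\<dots> = (L * Dp) $$ (a,b)"
        unfolding Dpm by (rule mult_multrow_entry[OF Lc ab', symmetric])
      finally show ?thesis .
    qed
    finally show "(S * M * Dd * S) $$ (a,b) = (L * Dp) $$ (a,b)" .
  qed (use Lc Dpc Mc in auto)
  have B2: "B = S * M * Dd * U"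
  proof -
    have c: "S * M * Dd \<in> carrier_mat d d" using Mc Dpc by auto
    have "S * M * Dd * U = (S * M * Dd * S) * V"
      unfolding U_def using assoc_mult_mat[OF c Dpc(3) Vc] by simp
    then show ?thesis using B1 key by simp
  qed
  have "good d (S * M)"
    by (rule unimod_good) (use Mc Dpc detS detM in \<open>auto simp: det_mult[of _ d]\<close>)
  then obtain Vs where Vs: "set Vs \<subseteq> elem d" "S * M = prod_mats d Vs" unfolding good_def by blast
  have "good d U" by (rule unimod_good[OF Uc detU])
  then obtain Us where Us: "set Us \<subseteq> elem d" "U = prod_mats d Us" unfolding good_def by blast
  have B3: "B = prod_mats d Vs * Dd * prod_mats d Us" using B2 Vs Us by simp
  have u1: "V \<in> unimod d" "U \<in> unimod d" using Vc Uc detV detU by (auto simp: unimod_def)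
  have "1 \<le> p \<and> p \<le> d \<and> (\<forall>j \<in> {1..<p}. r j \<in> {0, 1}) \<and>
           V \<in> unimod d \<and> U \<in> unimod d \<and>
           set Vs \<subseteq> elem d \<and> set Us \<subseteq> elem d \<and>
           B = Lmat d p r * Dmat d p * V \<and>
           B = Iswap d p d * Mmat d p r * Dmat d d * U \<and>
           B = prod_mats d Vs * Dmat d d * prod_mats d Us"
    unfolding L_def[symmetric] M_def[symmetric] Dp_def[symmetric] Dd_def[symmetric] S_def[symmetric]
    using qd r01 u1 Vs(1) Us(1) B1 B2 B3 by (simp only: p_def) (intro conjI; simp)
  then show ?thesis by blast
qed

end
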